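(* Let $p\ge2$, $m\in\mathbb{N}$, $a,b>0$, $\beta\in\mathbb{R}^p$, and consider the multiple regression function $f(x)=(1,x^T)^T$ for $x\in\mathbb{R}^{p-1}$. Let $x_1,\ldots,x_p\in\mathbb{R}^{p-1}$ be such that $f(x_1),\ldots,f(x_p)$ are linearly independent, let $c\in\mathbb{R}$ with $f(x_j)^T\beta=c$ for $j=1,\ldots,p-1$, and assume $f(x_p)^T\beta>c$. Among all designs $\xi$ supported on $\{x_1,\ldots,x_p\}$ with weights $w_1,\ldots,w_p$, the weights maximizing $\det(M(\xi;\beta))$ are $$w_p^*=\frac{2}{p+\sqrt{(p-2)^2+4(p-1)\dfrac{1+\frac{m}{b}\exp(f(x_p)^T\beta)}{1+\frac{m}{b}\exp(c)}}},\qquad w_1^*=\cdots=w_{p-1}^*=\frac{1-w_p^*}{p-1},$$ and these weights satisfy $0<w_p^*<\frac1p<w_1^*=\cdots=w_{p-1}^*<\frac{1}{p-1}$.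
   Context: A design $\xi$ is a probability measure with finite support $x_1,\ldots,x_l$ and weights $w_1,\ldots,w_l\ge0$, $\sum_j w_j=1$. The Poisson information matrix is $M_{Po}(\xi;\beta)=\sum_{j=1}^l w_j\exp(f(x_j)^T\beta)f(x_j)f(x_j)^T$, and the Poisson–Gamma information matrix is $M(\xi;\beta)=\frac{a}{b}\Bigl(M_{Po}(\xi;\beta)-\frac{M_{Po}(\xi;\beta)e_1e_1^TM_{Po}(\xi;\beta)}{e_1^TM_{Po}(\xi;\beta)e_1+b/m}\Bigr)$, where $e_1$ is the first standard unit vector of $\mathbb{R}^p$. *)

theory Defs
  imports "Jordan_Normal_Form.VS_Connect" "Jordan_Normal_Form.Determinant"
begin

definition regf :: "real vec \<Rightarrow> real vec" where
  "regf x = vCons 1 x"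

definition lin_indpt_family :: "nat \<Rightarrow> (nat \<Rightarrow> real vec) \<Rightarrow> nat set \<Rightarrow> bool" where
  "lin_indpt_family n v J \<longleftrightarrow> (\<forall>j\<in>J. v j \<in> carrier_vec n) \<and> inj_on v J \<and>
     \<not> module.lin_dep class_ring (module_vec TYPE(real) n) (v ` J)"

text \<open>Design supported on the points x j, j in J, with weights w j.\<close>
definition is_design_weights :: "nat set \<Rightarrow> (nat \<Rightarrow> real) \<Rightarrow> bool" where
  "is_design_weights J w \<longleftrightarrow> (\<forall>j\<in>J. w j \<ge> 0) \<and> (\<Sum>j\<in>J. w j) = 1"

definition M_Po :: "nat \<Rightarrow> nat set \<Rightarrow> (nat \<Rightarrow> real vec) \<Rightarrow> (nat \<Rightarrow> real) \<Rightarrow> real vec \<Rightarrow> real mat" where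
  "M_Po p J x w \<beta> = mat p p (\<lambda>(i,k). \<Sum>j\<in>J. w j * exp (regf (x j) \<bullet> \<beta>) * (regf (x j) $ i) * (regf (x j) $ k))"

definition e1e1T :: "nat \<Rightarrow> real mat" where
  "e1e1T p = mat p p (\<lambda>(i,k). if i = 0 \<and> k = 0 then 1 else 0)"

definition M_PG :: "real \<Rightarrow> real \<Rightarrow> nat \<Rightarrow> nat \<Rightarrow> nat set \<Rightarrow> (nat \<Rightarrow> real vec) \<Rightarrow> (nat \<Rightarrow> real) \<Rightarrow> real vec \<Rightarrow> real mat" where
  "M_PG a b m p J x w \<beta> =
     (let Mp = M_Po p J x w \<beta>; e1 = unit_vec p 0 in
      (a / b) \<cdot>\<^sub>m (Mp - (1 / (e1 \<bullet> (Mp *\<^sub>v e1) + b / real m)) \<cdot>\<^sub>m (Mp * e1e1T p * Mp)))"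

end

theory Submission
  imports Defs "Jordan_Normal_Form.DL_Rank"
begin


lemma exp_strict: fixes x :: real assumes "x \<noteq> 0" shows "1 + x < exp x"
proof (cases "1 + x/2 \<ge> 0")
  case True
  have "1 + x/2 \<le> exp (x/2)" by (rule exp_ge_add_one_self)
  hence "(1 + x/2)^2 \<le> (exp (x/2))^2" using True by (intro power_mono) auto
  also have "(exp (x/2))^2 = exp x" by (simp add: power2_eq_square flip: exp_add)
  finally have "(1+x/2)^2 \<le> exp x" .
  moreover have "0 < x*x" by (metis assms not_real_square_gt_zero)
  moreover have "(1+x/2)^2 = 1 + x + x*x/4" by (simp add: power2_eq_square field_simps)
  ultimately show ?thesis by linarith
next
  case False
  then show ?thesis using exp_gt_zero[of x] by linarith
qed

lemma le_exp_minus1: fixes y :: real shows "y \<le> exp (y - 1)"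
  using exp_ge_add_one_self[of "y-1"] by simp

lemma less_exp_minus1: fixes y :: real assumes "y \<noteq> 1" shows "y < exp (y - 1)"
  using exp_strict[of "y-1"] assms by simp

lemma t0_props:
  fixes p :: nat and r :: real
  assumes p: "p \<ge> 2" and r: "r > 1"
  defines "t0 \<equiv> 2 / (real p + sqrt ((real p - 2)^2 + 4 * (real p - 1) * r))"
  shows "0 < t0" "t0 < 1 / real p" "(real p - 1) * (r - 1) * t0^2 + real p * t0 - 1 = 0"
proof -
  define s where "s = sqrt ((real p - 2)^2 + 4 * (real p - 1) * r)"
  have rad: "(real p - 2)^2 + 4 * (real p - 1) * r > (real p)^2"
  proof -
    have "4 * (real p - 1) * r > 4 * (real p - 1)" using p r by simp
    thus ?thesis by (simp add: power2_eq_square algebra_simps)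
  qed
  have s2: "s^2 = (real p - 2)^2 + 4 * (real p - 1) * r" unfolding s_def
    using rad by (intro real_sqrt_pow2) (smt (verit) zero_le_power2)
  have sp: "s > real p" unfolding s_def using rad
    by (metis of_nat_0_le_iff real_less_rsqrt)
  have t0s: "t0 = 2 / (real p + s)" unfolding t0_def s_def ..
  have pp: "real p \<ge> 2" using p by simp
  show "0 < t0" unfolding t0s using sp pp by simp
  show "t0 < 1 / real p" unfolding t0s using sp pp by (simp add: field_simps)
  define u where "u = real p + s"
  have u0: "u > 0" unfolding u_def using sp pp by simp
  have tu: "t0 * u = 2" unfolding t0s using u0 u_def by (simp add: field_simps)
  have "((real p - 1) * (r - 1) * t0^2 + real p * t0 - 1) * u^2
      = (real p - 1) * (r - 1) * (t0*u)^2 + real p * (t0*u) * u - u^2"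
    by (simp add: algebra_simps power2_eq_square)
  also have "\<dots> = 4 * (real p - 1) * (r - 1) + 2 * real p * u - u^2" unfolding tu by simp
  also have "\<dots> = 0" using s2 unfolding u_def by (simp add: power2_eq_square algebra_simps)
  finally show "(real p - 1) * (r - 1) * t0^2 + real p * t0 - 1 = 0" using u0 by simp
qed

lemma opt_ineq:
  fixes p :: nat and d D t0 :: real and w :: "nat \<Rightarrow> real"
  assumes p: "p \<ge> 2" and d: "0 < d" and dD: "d < D"
    and t0pos: "0 < t0" and t01: "t0 < 1"
    and quad: "(real p - 1) * (D / d - 1) * t0^2 + real p * t0 - 1 = 0"
    and w0: "\<forall>j\<in>{1..p}. w j \<ge> 0" and wsum: "(\<Sum>j\<in>{1..p}. w j) = 1"
  defines "q \<equiv> (1 - t0) / (real p - 1)"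
  shows "(\<Prod>j\<in>{1..p-1}. w j) * w p * (d*(1-t0) + D*t0) \<le> q^(p-1) * t0 * (d*(1-w p) + D*w p)"
    and "(\<Prod>j\<in>{1..p-1}. w j) * w p * (d*(1-t0) + D*t0) = q^(p-1) * t0 * (d*(1-w p) + D*w p)
          \<Longrightarrow> \<forall>j\<in>{1..p-1}. w j = q"
proof -
  define Ls where "Ls = d*(1-t0) + D*t0"
  define L where "L = d*(1-w p) + D*w p"
  have pp: "real p \<ge> 2" using p by simp
  have q0: "q > 0" unfolding q_def using t01 pp by simp
  have split: "{1..p} = insert p {1..p-1}" using p by auto
  have pn: "p \<notin> {1..p-1}" by auto
  have sumsplit: "(\<Sum>j\<in>{1..p-1}. w j) + w p = 1" using wsum unfolding split
    using pn by (simp add: add.commute)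
  have wp0: "w p \<ge> 0" using w0 p by auto
  have s0: "(\<Sum>j\<in>{1..p-1}. w j) \<ge> 0" using w0 by (intro sum_nonneg) auto
  have wp1: "w p \<le> 1" using sumsplit s0 by linarith
  have Ls0: "Ls > 0"
  proof -
    have "Ls = d + (D - d) * t0" unfolding Ls_def by (simp add: algebra_simps)
    moreover have "(D - d) * t0 \<ge> 0" using dD t0pos by simp
    ultimately show ?thesis using d by linarith
  qed
  have L0: "L > 0"
  proof -
    have "L = d + (D - d) * w p" unfolding L_def by (simp add: algebra_simps)
    moreover have "(D - d) * w p \<ge> 0" using dD wp0 by simp
    ultimately show ?thesis using d by linarith
  qed
  have card: "card {1..p-1} = p - 1" by simp
  define A1 where "A1 = (\<Sum>j\<in>{1..p-1}. w j / q - 1)"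
  define A2 where "A2 = d * (w p - t0) / (t0 * Ls)"
  have A1eq: "A1 = (1 - w p) / q - (real p - 1)"
  proof -
    have "A1 = (\<Sum>j\<in>{1..p-1}. w j) / q - real (p - 1)"
      unfolding A1_def by (simp add: sum_subtractf sum_divide_distrib)
    thus ?thesis using sumsplit p by (simp add: of_nat_diff)
  qed
  have key0: "d * (1 - t0) = (real p - 1) * t0 * Ls"
  proof -
    have "d * ((real p - 1) * (D / d - 1) * t0^2 + real p * t0 - 1) = 0" using quad by simp
    moreover have "d * ((real p - 1) * (D / d - 1) * t0^2 + real p * t0 - 1)
       = (real p - 1) * ((D / d - 1) * d) * t0^2 + real p * d * t0 - d" by (simp add: algebra_simps)
    moreover have "(D / d - 1) * d = D - d" using d by (simp add: field_simps)
    ultimately have "(real p - 1) * (D - d) * t0^2 + real p * d * t0 - d = 0" by simp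
    thus ?thesis unfolding Ls_def by (simp add: algebra_simps power2_eq_square)
  qed
  have A12: "A1 + A2 = 0"
  proof -
    have dd: "d = (real p - 1) * t0 * Ls / (1 - t0)" using key0 t01 by (simp add: field_simps)
    have "A2 = (real p - 1) * (w p - t0) / (1 - t0)"
      unfolding A2_def dd using t0pos t01 Ls0 by (simp add: field_simps)
    moreover have "A1 = (real p - 1) * (t0 - w p) / (1 - t0)"
      unfolding A1eq q_def using t01 pp by (simp add: field_simps)
    ultimately show ?thesis by (simp add: add_divide_distrib[symmetric] algebra_simps)
  qed
  have h1f: "\<And>j. w j \<le> q * exp (w j / q - 1)"
    using le_exp_minus1 q0 by (metis mult.commute pos_divide_le_eq)
  have h1: "(\<Prod>j\<in>{1..p-1}. w j) \<le> (\<Prod>j\<in>{1..p-1}. q * exp (w j / q - 1))"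
    using w0 h1f by (intro prod_mono) auto
  have h1r: "(\<Prod>j\<in>{1..p-1}. q * exp (w j / q - 1)) = q^(p-1) * exp A1"
    unfolding A1_def by (simp add: prod.distrib exp_sum card)
  define x where "x = w p * Ls / (t0 * L)"
  have xm1: "x - 1 = d * (w p - t0) / (t0 * L)"
  proof -
    have "x - 1 = (w p * Ls - t0 * L) / (t0 * L)" unfolding x_def using t0pos L0 by (simp add: field_simps)
    moreover have "w p * Ls - t0 * L = d * (w p - t0)" unfolding Ls_def L_def by (simp add: algebra_simps)
    ultimately show ?thesis by simp
  qed
  have diff: "d * (w p - t0) / (t0 * L) - A2 = - d * (D - d) * (w p - t0)^2 / (t0 * L * Ls)"
  proof -
    have "d * (w p - t0) / (t0 * L) - A2 = d * (w p - t0) * (Ls - L) / (t0 * L * Ls)"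
      unfolding A2_def using t0pos L0 Ls0 by (simp add: field_simps)
    moreover have "Ls - L = - (D - d) * (w p - t0)" unfolding Ls_def L_def by (simp add: algebra_simps)
    ultimately show ?thesis by (simp add: power2_eq_square algebra_simps)
  qed
  have "d * (D - d) * (w p - t0)^2 / (t0 * L * Ls) \<ge> 0"
    using d dD t0pos L0 Ls0 by (intro divide_nonneg_pos mult_nonneg_nonneg) auto
  hence xA2: "x - 1 \<le> A2" using diff xm1 by linarith
  have h2: "w p * Ls \<le> t0 * L * exp A2"
  proof -
    have "x \<le> exp (x - 1)" by (rule le_exp_minus1)
    also have "\<dots> \<le> exp A2" using xA2 by simp
    finally have "x \<le> exp A2" .
    moreover have "w p * Ls = t0 * L * x" unfolding x_def using t0pos L0 by simp
    ultimately show ?thesis using t0pos L0 by simp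
  qed
  have P1: "(\<Prod>j\<in>{1..p-1}. w j) \<ge> 0" using w0 by (intro prod_nonneg) auto
  have P2: "w p * Ls \<ge> 0" using wp0 Ls0 by simp
  have Q2: "t0 * L * exp A2 > 0" using t0pos L0 by simp
  have fin: "q^(p-1) * exp A1 * (t0 * L * exp A2) = q^(p-1) * t0 * L"
  proof -
    have "q^(p-1) * exp A1 * (t0 * L * exp A2) = q^(p-1) * t0 * L * exp (A1 + A2)"
      by (simp add: exp_add)
    thus ?thesis using A12 by simp
  qed
  have "(\<Prod>j\<in>{1..p-1}. w j) * w p * Ls = (\<Prod>j\<in>{1..p-1}. w j) * (w p * Ls)" by simp
  also have "\<dots> \<le> q^(p-1) * exp A1 * (t0 * L * exp A2)"
    using h1 h1r h2 P1 P2 by (metis mult_mono' order_trans)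
  also have "\<dots> = q^(p-1) * t0 * L" by (rule fin)
  finally show "(\<Prod>j\<in>{1..p-1}. w j) * w p * (d*(1-t0) + D*t0) \<le> q^(p-1) * t0 * (d*(1-w p) + D*w p)"
    unfolding Ls_def L_def .
  assume eq: "(\<Prod>j\<in>{1..p-1}. w j) * w p * (d*(1-t0) + D*t0) = q^(p-1) * t0 * (d*(1-w p) + D*w p)"
  show "\<forall>j\<in>{1..p-1}. w j = q"
  proof (rule ccontr)
    assume "\<not> (\<forall>j\<in>{1..p-1}. w j = q)"
    then obtain k where k: "k \<in> {1..p-1}" "w k \<noteq> q" by auto
    have "w k / q \<noteq> 1" using k q0 by simp
    hence "w k / q < exp (w k / q - 1)" by (rule less_exp_minus1)
    hence hk: "w k < q * exp (w k / q - 1)" using q0 by (simp add: pos_divide_less_eq mult.commute)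
    have s1: "(\<Prod>j\<in>{1..p-1}. w j) < (\<Prod>j\<in>{1..p-1}. q * exp (w j / q - 1))"
      using k hk w0 h1f q0 by (intro prod_mono_strict[of k]) auto
    have "(\<Prod>j\<in>{1..p-1}. w j) * (w p * Ls) \<le> (\<Prod>j\<in>{1..p-1}. w j) * (t0 * L * exp A2)"
      using P1 h2 by (rule mult_left_mono[rotated])
    also have "\<dots> < q^(p-1) * exp A1 * (t0 * L * exp A2)"
      using s1 Q2 unfolding h1r by (rule mult_strict_right_mono)
    also have "\<dots> = q^(p-1) * t0 * L" by (rule fin)
    finally show False using eq unfolding Ls_def L_def by (simp add: mult.assoc)
  qed
qed



lemma mult_entry:
  assumes "A \<in> carrier_mat n n" "B \<in> carrier_mat n n" "i < n" "j < n"
  shows "(A * B) $$ (i,j) = (\<Sum>l<n. A $$ (i,l) * B $$ (l,j))"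
  using assms by (simp add: scalar_prod_def lessThan_atLeast0)

lemma det_rank1:
  fixes u :: "nat \<Rightarrow> real"
  assumes n: "n > 0"
  shows "det (mat n n (\<lambda>(i,k). (if i = k then 1 else 0) + u k)) = 1 + (\<Sum>k<n. u k)"
proof -
  define A where "A = mat n n (\<lambda>(i,k). (if i = k then 1 else 0) + u k)"
  define R :: "real mat" where "R = mat n n (\<lambda>(l,k). if k = 0 then 1 else if l = k then 1 else 0)"
  define Lm :: "real mat" where "Lm = mat n n (\<lambda>(i,l). (if i = l then 1 else 0) - (if l = 0 \<and> i \<noteq> 0 then 1 else 0))"
  define T :: "real mat" where "T = mat n n (\<lambda>(i,k). if i = 0 then (if k = 0 then 1 + (\<Sum>k<n. u k) else u k)
        else (if i = k then 1 else 0))"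
  have cA: "A \<in> carrier_mat n n" and cR: "R \<in> carrier_mat n n" and cL: "Lm \<in> carrier_mat n n"
    and cT: "T \<in> carrier_mat n n"
    unfolding A_def R_def Lm_def T_def by auto
  have AR: "A * R = mat n n (\<lambda>(i,k). if k = 0 then 1 + (\<Sum>k<n. u k) else A $$ (i,k))"
  proof (rule eq_matI)
    fix i k assume ik: "i < dim_row (mat n n (\<lambda>(i,k). if k = 0 then 1 + (\<Sum>k<n. u k) else A $$ (i,k)))"
      "k < dim_col (mat n n (\<lambda>(i,k). if k = 0 then 1 + (\<Sum>k<n. u k) else A $$ (i,k)))"
    hence i: "i < n" and k: "k < n" by auto
    have "(A * R) $$ (i,k) = (\<Sum>l<n. A $$ (i,l) * R $$ (l,k))" using mult_entry[OF cA cR i k] .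
    also have "\<dots> = (if k = 0 then 1 + (\<Sum>k<n. u k) else A $$ (i,k))"
    proof (cases "k = 0")
      case True
      have "(\<Sum>l<n. A $$ (i,l) * R $$ (l,k)) = (\<Sum>l<n. (if i = l then 1 else 0) + u l)"
        using True i by (intro sum.cong) (auto simp: A_def R_def)
      also have "\<dots> = 1 + (\<Sum>k<n. u k)" using i by (simp add: sum.distrib)
      finally show ?thesis using True by simp
    next
      case False
      have "(\<Sum>l<n. A $$ (i,l) * R $$ (l,k)) = (\<Sum>l<n. if l = k then A $$ (i,k) else 0)"
        using False k by (intro sum.cong) (auto simp: R_def)
      also have "\<dots> = A $$ (i,k)" using k by simp
      finally show ?thesis using False by simp
    qed
    finally show "(A * R) $$ (i,k) = mat n n (\<lambda>(i,k). if k = 0 then 1 + (\<Sum>k<n. u k) else A $$ (i,k)) $$ (i,k)"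
      using i k by simp
  qed (use cA cR in auto)
  define B where "B = A * R"
  have cB: "B \<in> carrier_mat n n" unfolding B_def using cA cR by auto
  have LB: "Lm * B = T"
  proof (rule eq_matI)
    fix i k assume ik: "i < dim_row T" "k < dim_col T"
    hence i: "i < n" and k: "k < n" using cT by auto
    have "(Lm * B) $$ (i,k) = (\<Sum>l<n. Lm $$ (i,l) * B $$ (l,k))" using mult_entry[OF cL cB i k] .
    also have "\<dots> = (\<Sum>l<n. (if i = l then B $$ (l,k) else 0) - (if l = 0 \<and> i \<noteq> 0 then B $$ (l,k) else 0))"
      using i by (intro sum.cong) (auto simp: Lm_def)
    also have "\<dots> = B $$ (i,k) - (if i \<noteq> 0 then B $$ (0,k) else 0)"
      using i n by (simp add: sum_subtractf)
    also have "\<dots> = T $$ (i,k)"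
      using i k n unfolding B_def AR T_def by (auto simp: A_def)
    finally show "(Lm * B) $$ (i,k) = T $$ (i,k)" .
  qed (use cL cB cT in auto)
  have dL: "det Lm = 1"
  proof -
    have "det Lm = prod_list (diag_mat Lm)"
      by (rule det_lower_triangular[OF _ cL]) (auto simp: Lm_def)
    also have "\<dots> = 1" unfolding prod_list_diag_prod using cL by (auto simp: Lm_def intro!: prod.neutral)
    finally show ?thesis .
  qed
  have dR: "det R = 1"
  proof -
    have "det R = prod_list (diag_mat R)"
      by (rule det_lower_triangular[OF _ cR]) (auto simp: R_def)
    also have "\<dots> = 1" unfolding prod_list_diag_prod using cR by (simp add: R_def)
    finally show ?thesis .
  qed
  have dT: "det T = 1 + (\<Sum>k<n. u k)"
  proof -
    have "det T = prod_list (diag_mat T)"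
      by (rule det_upper_triangular[OF _ cT]) (auto simp: T_def upper_triangular_def)
    also have "\<dots> = (\<Prod>i = 0..<n. T $$ (i,i))" unfolding prod_list_diag_prod using cT by simp
    also have "\<dots> = T $$ (0,0) * (\<Prod>i = 1..<n. T $$ (i,i))"
      using n by (simp add: prod.atLeast_Suc_lessThan)
    also have "(\<Prod>i = 1..<n. T $$ (i,i)) = 1" by (intro prod.neutral) (auto simp: T_def)
    finally show ?thesis using n by (simp add: T_def)
  qed
  have "det T = det Lm * det B" unfolding LB[symmetric] by (rule det_mult[OF cL cB])
  also have "det B = det A * det R" unfolding B_def by (rule det_mult[OF cA cR])
  finally show ?thesis using dL dR dT unfolding A_def by simp
qed

lemma e1e1T_entry:
  fixes A :: "real mat"
  assumes A: "A \<in> carrier_mat n n" and n: "n > 0" and i: "i < n" and k: "k < n"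
  shows "(A * e1e1T n * A) $$ (i,k) = A $$ (i,0) * A $$ (0,k)"
proof -
  have cE: "e1e1T n \<in> carrier_mat n n" unfolding e1e1T_def by auto
  have cAE: "A * e1e1T n \<in> carrier_mat n n" using A cE by auto
  have AE: "\<And>i l. i < n \<Longrightarrow> l < n \<Longrightarrow> (A * e1e1T n) $$ (i,l) = (if l = 0 then A $$ (i,0) else 0)"
  proof -
    fix i l assume i: "i < n" and l: "l < n"
    have "(A * e1e1T n) $$ (i,l) = (\<Sum>j<n. A $$ (i,j) * e1e1T n $$ (j,l))" by (rule mult_entry[OF A cE i l])
    also have "\<dots> = (\<Sum>j<n. if j = 0 then (if l = 0 then A $$ (i,0) else 0) else 0)"
      using l by (intro sum.cong) (auto simp: e1e1T_def)
    also have "\<dots> = (if l = 0 then A $$ (i,0) else 0)" using n by simp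
    finally show "(A * e1e1T n) $$ (i,l) = (if l = 0 then A $$ (i,0) else 0)" .
  qed
  have "(A * e1e1T n * A) $$ (i,k) = (\<Sum>l<n. (A * e1e1T n) $$ (i,l) * A $$ (l,k))"
    by (rule mult_entry[OF cAE A i k])
  also have "\<dots> = (\<Sum>l<n. if l = 0 then A $$ (i,0) * A $$ (0,k) else 0)"
    using i by (intro sum.cong) (auto simp: AE)
  also have "\<dots> = A $$ (i,0) * A $$ (0,k)" using n by simp
  finally show ?thesis .
qed

lemma MPG_factor:
  fixes Y :: "real mat" and \<omega> :: "nat \<Rightarrow> real" and a b \<beta>0 :: real
  assumes cY: "Y \<in> carrier_mat p p" and p: "p > 0" and Y0: "\<forall>k<p. Y $$ (0,k) = 1"
  defines "MP \<equiv> mat p p (\<lambda>(i,k). \<Sum>l<p. \<omega> l * Y $$ (i,l) * Y $$ (k,l))"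
  defines "\<kappa> \<equiv> 1 / ((\<Sum>l<p. \<omega> l) + \<beta>0)"
  defines "N \<equiv> mat p p (\<lambda>(i,k). (a/b) * ((if i = k then \<omega> i else 0) - \<kappa> * \<omega> i * \<omega> k))"
  shows "(a/b) \<cdot>\<^sub>m (MP - (1 / (unit_vec p 0 \<bullet> (MP *\<^sub>v unit_vec p 0) + \<beta>0)) \<cdot>\<^sub>m (MP * e1e1T p * MP))
     = Y * N * transpose_mat Y"
proof -
  have cMP: "MP \<in> carrier_mat p p" unfolding MP_def by auto
  have cN: "N \<in> carrier_mat p p" unfolding N_def by auto
  have cYt: "transpose_mat Y \<in> carrier_mat p p" using cY by auto
  have cYN: "Y * N \<in> carrier_mat p p" using cY cN by auto
  have MPi0: "\<And>i. i < p \<Longrightarrow> MP $$ (i,0) = (\<Sum>l<p. \<omega> l * Y $$ (i,l))"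
    unfolding MP_def using p Y0 by simp
  have MP0k: "\<And>k. k < p \<Longrightarrow> MP $$ (0,k) = (\<Sum>l<p. \<omega> l * Y $$ (k,l))"
    unfolding MP_def using p Y0 by simp
  have e: "unit_vec p 0 \<bullet> (MP *\<^sub>v unit_vec p 0) = (\<Sum>l<p. \<omega> l)"
  proof -
    have "unit_vec p 0 \<bullet> (MP *\<^sub>v unit_vec p 0) = (MP *\<^sub>v unit_vec p 0) $ 0"
      using p cMP by (intro scalar_prod_left_unit) auto
    also have "\<dots> = row MP 0 \<bullet> unit_vec p 0" using p cMP by (simp add: index_mult_mat_vec)
    also have "\<dots> = MP $$ (0,0)" using p cMP by (simp add: scalar_prod_right_unit)
    also have "\<dots> = (\<Sum>l<p. \<omega> l)" using MPi0[OF p] Y0 p by simp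
    finally show ?thesis .
  qed
  have YN: "\<And>i l. i < p \<Longrightarrow> l < p \<Longrightarrow> (Y * N) $$ (i,l)
      = (a/b) * (Y $$ (i,l) * \<omega> l - \<kappa> * \<omega> l * (\<Sum>j<p. \<omega> j * Y $$ (i,j)))"
  proof -
    fix i l assume i: "i < p" and l: "l < p"
    have "(Y * N) $$ (i,l) = (\<Sum>j<p. Y $$ (i,j) * N $$ (j,l))" by (rule mult_entry[OF cY cN i l])
    also have "\<dots> = (\<Sum>j<p. (a/b) * ((if j = l then Y $$ (i,l) * \<omega> l else 0)
         - \<kappa> * \<omega> l * (\<omega> j * Y $$ (i,j))))"
      using l by (intro sum.cong) (auto simp: N_def algebra_simps)
    also have "\<dots> = (a/b) * ((\<Sum>j<p. (if j = l then Y $$ (i,l) * \<omega> l else 0))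
         - (\<Sum>j<p. \<kappa> * \<omega> l * (\<omega> j * Y $$ (i,j))))"
      by (simp only: sum_distrib_left[symmetric] sum_subtractf)
    also have "\<dots> = (a/b) * (Y $$ (i,l) * \<omega> l - \<kappa> * \<omega> l * (\<Sum>j<p. \<omega> j * Y $$ (i,j)))"
      using l by (simp add: sum_distrib_left)
    finally show "(Y * N) $$ (i,l) = (a/b) * (Y $$ (i,l) * \<omega> l - \<kappa> * \<omega> l * (\<Sum>j<p. \<omega> j * Y $$ (i,j)))" .
  qed
  show ?thesis
  proof (rule eq_matI)
    fix i k assume "i < dim_row (Y * N * transpose_mat Y)" "k < dim_col (Y * N * transpose_mat Y)"
    hence i: "i < p" and k: "k < p" using cY cN by auto
    have "(Y * N * transpose_mat Y) $$ (i,k) = (\<Sum>l<p. (Y * N) $$ (i,l) * transpose_mat Y $$ (l,k))"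
      by (rule mult_entry[OF cYN cYt i k])
    also have "\<dots> = (\<Sum>l<p. (a/b) * (\<omega> l * Y $$ (i,l) * Y $$ (k,l))
        - (a/b) * \<kappa> * (\<Sum>j<p. \<omega> j * Y $$ (i,j)) * (\<omega> l * Y $$ (k,l)))"
      using i k cY by (intro sum.cong) (auto simp: YN algebra_simps)
    also have "\<dots> = (a/b) * (\<Sum>l<p. \<omega> l * Y $$ (i,l) * Y $$ (k,l))
        - (a/b) * \<kappa> * (\<Sum>j<p. \<omega> j * Y $$ (i,j)) * (\<Sum>l<p. \<omega> l * Y $$ (k,l))"
      by (simp add: sum_subtractf sum_distrib_left)
    also have "\<dots> = ((a/b) \<cdot>\<^sub>m (MP - (1 / (unit_vec p 0 \<bullet> (MP *\<^sub>v unit_vec p 0) + \<beta>0)) \<cdot>\<^sub>m (MP * e1e1T p * MP))) $$ (i,k)"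
      using i k cMP p by (simp add: e e1e1T_entry[OF cMP p i k] MPi0 MP0k \<kappa>_def algebra_simps)
        (simp add: MP_def i k mult.assoc)
    finally show "((a/b) \<cdot>\<^sub>m (MP - (1 / (unit_vec p 0 \<bullet> (MP *\<^sub>v unit_vec p 0) + \<beta>0)) \<cdot>\<^sub>m (MP * e1e1T p * MP))) $$ (i,k)
       = (Y * N * transpose_mat Y) $$ (i,k)" by simp
  qed (use cMP cY cN in auto)
qed

lemma det_N:
  fixes \<omega> :: "nat \<Rightarrow> real" and a b \<kappa> :: real
  assumes p: "p > 0"
  shows "det (mat p p (\<lambda>(i,k). (a/b) * ((if i = k then \<omega> i else 0) - \<kappa> * \<omega> i * \<omega> k)))
     = (a/b)^p * (\<Prod>l<p. \<omega> l) * (1 - \<kappa> * (\<Sum>l<p. \<omega> l))"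
proof -
  define D :: "real mat" where "D = mat p p (\<lambda>(i,k). if i = k then \<omega> i else 0)"
  define A :: "real mat" where "A = mat p p (\<lambda>(i,k). (if i = k then 1 else 0) + (- \<kappa> * \<omega> k))"
  have cD: "D \<in> carrier_mat p p" and cA: "A \<in> carrier_mat p p" unfolding D_def A_def by auto
  have DA: "mat p p (\<lambda>(i,k). (a/b) * ((if i = k then \<omega> i else 0) - \<kappa> * \<omega> i * \<omega> k)) = (a/b) \<cdot>\<^sub>m (D * A)"
  proof (rule eq_matI)
    fix i k assume "i < dim_row ((a/b) \<cdot>\<^sub>m (D * A))" "k < dim_col ((a/b) \<cdot>\<^sub>m (D * A))"
    hence i: "i < p" and k: "k < p" using cD cA by auto
    have "(D * A) $$ (i,k) = (\<Sum>l<p. D $$ (i,l) * A $$ (l,k))" by (rule mult_entry[OF cD cA i k])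
    also have "\<dots> = (\<Sum>l<p. if l = i then \<omega> i * A $$ (i,k) else 0)"
      using i by (intro sum.cong) (auto simp: D_def)
    also have "\<dots> = \<omega> i * A $$ (i,k)" using i by simp
    finally have DAik: "(D * A) $$ (i,k) = \<omega> i * A $$ (i,k)" .
    have sm: "((a/b) \<cdot>\<^sub>m (D*A)) $$ (i,k) = (a/b) * ((D*A) $$ (i,k))"
      using i k cD cA by (intro index_smult_mat(1)) auto
    show "mat p p (\<lambda>(i,k). (a/b) * ((if i = k then \<omega> i else 0) - \<kappa> * \<omega> i * \<omega> k)) $$ (i,k)
      = ((a/b) \<cdot>\<^sub>m (D * A)) $$ (i,k)" unfolding sm DAik using i k by (simp add: A_def algebra_simps)
  qed (use cD cA in auto)
  have dD: "det D = (\<Prod>l<p. \<omega> l)"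
  proof -
    have "det D = prod_list (diag_mat D)"
      by (rule det_upper_triangular[OF _ cD]) (auto simp: D_def upper_triangular_def)
    also have "\<dots> = (\<Prod>l<p. \<omega> l)" unfolding prod_list_diag_prod using cD
      by (simp add: D_def lessThan_atLeast0)
    finally show ?thesis .
  qed
  have dA: "det A = 1 - \<kappa> * (\<Sum>l<p. \<omega> l)"
    unfolding A_def using det_rank1[OF p, of "\<lambda>k. - \<kappa> * \<omega> k"]
    by (simp add: sum_distrib_left sum_negf)
  have "det ((a/b) \<cdot>\<^sub>m (D * A)) = (a/b)^p * (det D * det A)"
    using cD cA by (simp add: det_mult[OF cD cA])
  thus ?thesis unfolding DA dD dA by simp
qed



lemma sum1: "(\<Sum>j\<in>{1..p}. g j) = (\<Sum>l<p. g (Suc l))"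
  by (metis One_nat_def sum.atLeast1_atMost_eq)

lemma prod1: "(\<Prod>j\<in>{1..p}. g j) = (\<Prod>l<p. g (Suc l))"
  by (metis One_nat_def prod.atLeast1_atMost_eq)

lemma regf_facts:
  assumes "x \<in> carrier_vec (p - 1)" "p \<ge> 1"
  shows "regf x \<in> carrier_vec p" "regf x $ 0 = 1"
proof -
  have "dim_vec x = p - 1" using assms(1) by (rule carrier_vecD)
  hence "dim_vec (regf x) = p" using assms(2) by (simp add: regf_def)
  thus "regf x \<in> carrier_vec p" by (rule carrier_vecI)
  show "regf x $ 0 = 1" by (simp add: regf_def)
qed
lemma detY_nonzero:
  fixes p :: nat and x :: "nat \<Rightarrow> real vec"
  assumes hp: "p \<ge> 2"
    and hx: "\<forall>j\<in>{1..p}. x j \<in> carrier_vec (p - 1)"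
    and hind: "lin_indpt_family p (\<lambda>j. regf (x j)) {1..p}"
  shows "det (mat p p (\<lambda>(i,k). regf (x (Suc k)) $ i)) \<noteq> 0"
proof
  define Y where "Y = mat p p (\<lambda>(i,k). regf (x (Suc k)) $ i)"
  have cY: "Y \<in> carrier_mat p p" unfolding Y_def by auto
  assume "det (mat p p (\<lambda>(i,k). regf (x (Suc k)) $ i)) = 0"
  hence "det Y = 0" unfolding Y_def .
  then obtain v where v: "v \<in> carrier_vec p" "v \<noteq> 0\<^sub>v p" "Y *\<^sub>v v = 0\<^sub>v p"
    using det_0_iff_vec_prod_zero[OF cY] by blast
  have rc: "regf (x (Suc k)) \<in> carrier_vec p" if k: "k < p" for k
  proof -
    have "Suc k \<in> {1..p}" using k by simp
    hence "x (Suc k) \<in> carrier_vec (p - 1)" using hx by blast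
    moreover have "p \<ge> 1" using hp by simp
    ultimately show ?thesis by (rule regf_facts(1))
  qed
  have colY: "col Y k = regf (x (Suc k))" if k: "k < p" for k
  proof -
    have dr: "dim_vec (regf (x (Suc k))) = p" using rc[OF k] by (rule carrier_vecD)
    show ?thesis by (rule eq_vecI) (simp_all add: Y_def k dr)
  qed
  have c1: "cols Y = map (col Y) [0..<p]" using cY by (simp add: cols_def)
  have colsY: "cols Y = map (\<lambda>k. regf (x (Suc k))) [0..<p]"
    unfolding c1 by (rule map_cong) (simp_all add: colY)
  have inj: "inj_on (\<lambda>j. regf (x j)) {1..p}" using hind unfolding lin_indpt_family_def by (elim conjE)
  have inj2: "inj_on (\<lambda>k. regf (x (Suc k))) (set [0..<p])"
  proof (rule inj_onI)
    fix k1 k2 assume k: "k1 \<in> set [0..<p]" "k2 \<in> set [0..<p]"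
      and eq: "regf (x (Suc k1)) = regf (x (Suc k2))"
    have "Suc k1 \<in> {1..p}" "Suc k2 \<in> {1..p}" using k by auto
    from inj_onD[OF inj eq this] show "k1 = k2" by simp
  qed
  have dist: "distinct (cols Y)" unfolding colsY distinct_map using inj2 by simp
  have setc: "set (cols Y) = (\<lambda>j. regf (x j)) ` {1..p}"
  proof -
    have "set (cols Y) = (\<lambda>k. regf (x (Suc k))) ` {0..<p}" unfolding colsY by simp
    also have "\<dots> = (\<lambda>j. regf (x j)) ` (Suc ` {0..<p})" by (simp only: image_image)
    also have "Suc ` {0..<p} = {1..p}" by (simp add: image_Suc_atLeastLessThan atLeastLessThanSuc_atLeastAtMost)
    finally show ?thesis .
  qed
  have "module.lin_dep class_ring (module_vec TYPE(real) p) (set (cols Y))"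
    using vec_space.lin_depI[OF cY v dist] .
  hence ld: "module.lin_dep class_ring (module_vec TYPE(real) p) ((\<lambda>j. regf (x j)) ` {1..p})"
    unfolding setc .
  have "\<not> module.lin_dep class_ring (module_vec TYPE(real) p) ((\<lambda>j. regf (x j)) ` {1..p})"
    using hind unfolding lin_indpt_family_def by (elim conjE)
  thus False using ld by contradiction
qed


lemma det_MPG_formula:
  fixes p m :: nat and a b :: real and \<beta> :: "real vec" and x :: "nat \<Rightarrow> real vec" and w :: "nat \<Rightarrow> real"
  assumes hp: "p \<ge> 2" and hm: "m \<ge> 1" and hb: "b > 0"
    and hx: "\<forall>j\<in>{1..p}. x j \<in> carrier_vec (p - 1)"
    and w0: "\<forall>j\<in>{1..p}. w j \<ge> 0"
  shows "det (M_PG a b m p {1..p} x w \<beta>) = (det (mat p p (\<lambda>(i,k). regf (x (Suc k)) $ i)))^2 * (a/b)^p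
     * ((\<Prod>j\<in>{1..p}. w j) * (\<Prod>j\<in>{1..p}. exp (regf (x j) \<bullet> \<beta>)))
     * (b / real m / ((\<Sum>j\<in>{1..p}. w j * exp (regf (x j) \<bullet> \<beta>)) + b / real m))"
proof -
  define Y where "Y = mat p p (\<lambda>(i,k). regf (x (Suc k)) $ i)"
  define E where "E = (\<lambda>j. exp (regf (x j) \<bullet> \<beta>))"
  define \<beta>0 where "\<beta>0 = b / real m"
  define \<omega> where "\<omega> = (\<lambda>l. w (Suc l) * E (Suc l))"
  have p0: "p > 0" using hp by simp
  have b0: "\<beta>0 > 0" unfolding \<beta>0_def using hb hm by simp
  have cY: "Y \<in> carrier_mat p p" unfolding Y_def by simp
  have Y0: "\<forall>k<p. Y $$ (0,k) = 1"
  proof (intro allI impI)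
    fix k assume k: "k < p"
    have "Suc k \<in> {1..p}" using k by simp
    hence "x (Suc k) \<in> carrier_vec (p - 1)" using hx by blast
    moreover have "p \<ge> 1" using hp by simp
    ultimately have "regf (x (Suc k)) $ 0 = 1" by (rule regf_facts(2))
    thus "Y $$ (0,k) = 1" unfolding Y_def using k p0 by simp
  qed
  have MPo: "M_Po p {1..p} x w \<beta> = mat p p (\<lambda>(i,k). \<Sum>l<p. \<omega> l * Y $$ (i,l) * Y $$ (k,l))"
  proof (rule eq_matI)
    fix i k assume "i < dim_row (mat p p (\<lambda>(i,k). \<Sum>l<p. \<omega> l * Y $$ (i,l) * Y $$ (k,l)))"
      "k < dim_col (mat p p (\<lambda>(i,k). \<Sum>l<p. \<omega> l * Y $$ (i,l) * Y $$ (k,l)))"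
    hence i: "i < p" and k: "k < p" by auto
    have "M_Po p {1..p} x w \<beta> $$ (i,k) = (\<Sum>j\<in>{1..p}. w j * E j * (regf (x j) $ i) * (regf (x j) $ k))"
      unfolding M_Po_def E_def using i k by simp
    also have "\<dots> = (\<Sum>l<p. w (Suc l) * E (Suc l) * (regf (x (Suc l)) $ i) * (regf (x (Suc l)) $ k))"
      by (rule sum1)
    also have "\<dots> = (\<Sum>l<p. \<omega> l * Y $$ (i,l) * Y $$ (k,l))"
      unfolding \<omega>_def Y_def using i k by (intro sum.cong) auto
    finally show "M_Po p {1..p} x w \<beta> $$ (i,k) = mat p p (\<lambda>(i,k). \<Sum>l<p. \<omega> l * Y $$ (i,l) * Y $$ (k,l)) $$ (i,k)"
      using i k by simp
  qed (auto simp: M_Po_def)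
  define \<kappa> where "\<kappa> = 1 / ((\<Sum>l<p. \<omega> l) + \<beta>0)"
  define N where "N = mat p p (\<lambda>(i,k). (a/b) * ((if i = k then \<omega> i else 0) - \<kappa> * \<omega> i * \<omega> k))"
  have MPG: "M_PG a b m p {1..p} x w \<beta> = Y * N * transpose_mat Y"
    unfolding M_PG_def Let_def MPo N_def \<kappa>_def \<beta>0_def
    by (rule MPG_factor[OF cY p0 Y0])
  have cN: "N \<in> carrier_mat p p" unfolding N_def by simp
  have dN: "det N = (a/b)^p * (\<Prod>l<p. \<omega> l) * (1 - \<kappa> * (\<Sum>l<p. \<omega> l))"
    unfolding N_def by (rule det_N[OF p0])
  have "det (Y * N * transpose_mat Y) = det (Y * N) * det (transpose_mat Y)"
    using cY cN by (intro det_mult[of _ p]) auto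
  also have "det (Y * N) = det Y * det N" by (rule det_mult[OF cY cN])
  also have "det (transpose_mat Y) = det Y" by (rule det_transpose[OF cY])
  finally have dM: "det (M_PG a b m p {1..p} x w \<beta>) = (det Y)^2 * det N"
    unfolding MPG by (simp add: power2_eq_square)
  have Sw: "(\<Sum>l<p. \<omega> l) = (\<Sum>j\<in>{1..p}. w j * E j)" unfolding \<omega>_def by (rule sum1[symmetric])
  have Pw: "(\<Prod>l<p. \<omega> l) = (\<Prod>j\<in>{1..p}. w j) * (\<Prod>j\<in>{1..p}. E j)"
    unfolding \<omega>_def prod1 by (rule prod.distrib)
  have S0: "(\<Sum>j\<in>{1..p}. w j * E j) \<ge> 0" using w0 unfolding E_def by (intro sum_nonneg) auto
  have k1: "1 - \<kappa> * (\<Sum>l<p. \<omega> l) = \<beta>0 / ((\<Sum>j\<in>{1..p}. w j * E j) + \<beta>0)"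
    unfolding \<kappa>_def Sw using S0 b0 by (simp add: field_simps)
  show ?thesis unfolding dM dN k1 Pw unfolding Y_def E_def \<beta>0_def by (simp add: mult.assoc)
qed

theorem theorem7:
  fixes p m :: nat and a b c :: real and \<beta> :: "real vec" and x :: "nat \<Rightarrow> real vec"
  assumes hp: "p \<ge> 2" and hm: "m \<ge> 1" and ha: "a > 0" and hb: "b > 0"
    and h\<beta>: "\<beta> \<in> carrier_vec p"
    and hx: "\<forall>j\<in>{1..p}. x j \<in> carrier_vec (p - 1)"
    and hind: "lin_indpt_family p (\<lambda>j. regf (x j)) {1..p}"
    and hc: "\<forall>j\<in>{1..p-1}. regf (x j) \<bullet> \<beta> = c"
    and hgt: "regf (x p) \<bullet> \<beta> > c"
  defines "wp \<equiv> 2 / (real p + sqrt ((real p - 2)^2 + 4 * (real p - 1) *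
              ((1 + real m / b * exp (regf (x p) \<bullet> \<beta>)) / (1 + real m / b * exp c))))"
  defines "wstar \<equiv> (\<lambda>j. if j = p then wp else (1 - wp) / (real p - 1))"
  shows "is_design_weights {1..p} wstar
    \<and> (\<forall>w. is_design_weights {1..p} w \<longrightarrow>
          det (M_PG a b m p {1..p} x w \<beta>) \<le> det (M_PG a b m p {1..p} x wstar \<beta>))
    \<and> (\<forall>w. is_design_weights {1..p} w \<and>
          det (M_PG a b m p {1..p} x w \<beta>) = det (M_PG a b m p {1..p} x wstar \<beta>)
          \<longrightarrow> (\<forall>j\<in>{1..p}. w j = wstar j))
    \<and> 0 < wp \<and> wp < 1 / real p
    \<and> (\<forall>j\<in>{1..p-1}. 1 / real p < wstar j \<and> wstar j < 1 / (real p - 1))"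
proof -
  have p0: "p > 0" using hp by simp
  have pp: "real p \<ge> 2" using hp by simp
  define \<beta>0 where "\<beta>0 = b / real m"
  have b0: "\<beta>0 > 0" unfolding \<beta>0_def using hb hm by simp
  define E where "E = (\<lambda>j. exp (regf (x j) \<bullet> \<beta>))"
  define d where "d = exp c + \<beta>0"
  define D where "D = exp (regf (x p) \<bullet> \<beta>) + \<beta>0"
  have d0: "d > 0" unfolding d_def using b0 by (simp add: add_pos_pos)
  have dD: "d < D" unfolding d_def D_def using hgt by simp
  have Ec: "\<forall>j\<in>{1..p-1}. E j = exp c" unfolding E_def using hc by simp
  have Ep: "E p = exp (regf (x p) \<bullet> \<beta>)" unfolding E_def by simp
  have rr: "(1 + real m / b * exp (regf (x p) \<bullet> \<beta>)) / (1 + real m / b * exp c) = D / d"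
  proof -
    have m0: "real m > 0" using hm by simp
    have "1 + real m / b * exp (regf (x p) \<bullet> \<beta>) = (real m / b) * D"
      unfolding D_def \<beta>0_def using m0 hb by (simp add: field_simps)
    moreover have "1 + real m / b * exp c = (real m / b) * d"
      unfolding d_def \<beta>0_def using m0 hb by (simp add: field_simps)
    ultimately show ?thesis using m0 hb by simp
  qed
  have wpt: "wp = 2 / (real p + sqrt ((real p - 2)^2 + 4 * (real p - 1) * (D / d)))"
    unfolding wp_def rr ..
  have r1: "D / d > 1" using d0 dD by simp
  note tp = t0_props[OF hp r1, folded wpt]
  have wp0: "0 < wp" and wpp: "wp < 1 / real p" and quad: "(real p - 1) * (D / d - 1) * wp^2 + real p * wp - 1 = 0"
    using tp by auto
  have wp1: "wp < 1" using wpp pp by (smt (verit) divide_le_eq_1_pos)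
  define q where "q = (1 - wp) / (real p - 1)"
  have wsq: "\<forall>j\<in>{1..p-1}. wstar j = q" unfolding wstar_def q_def by auto
  have wsp: "wstar p = wp" unfolding wstar_def by simp
  have q0: "q > 0" unfolding q_def using wp1 pp by simp
  have q1: "1 / real p < q" unfolding q_def using wpp pp by (simp add: field_simps)
  have q2: "q < 1 / (real p - 1)" unfolding q_def using wp0 pp by (simp add: field_simps)
  have split: "{1..p} = insert p {1..p-1}" using hp by auto
  have pn: "p \<notin> {1..p-1}" by auto
  have cardp: "real (card {1..p-1}) = real p - 1" using hp by (simp add: of_nat_diff)
  have design: "is_design_weights {1..p} wstar"
    unfolding is_design_weights_def
  proof
    show "\<forall>j\<in>{1..p}. 0 \<le> wstar j" unfolding wstar_def using wp0 q0 q_def by auto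
    have "(\<Sum>j\<in>{1..p}. wstar j) = wstar p + (\<Sum>j\<in>{1..p-1}. wstar j)" unfolding split using pn by simp
    also have "(\<Sum>j\<in>{1..p-1}. wstar j) = (\<Sum>j\<in>{1..p-1}. q)" using wsq by (intro sum.cong) auto
    also have "\<dots> = (real p - 1) * q" using cardp by simp
    also have "(real p - 1) * q = 1 - wp" unfolding q_def using pp by simp
    finally show "(\<Sum>j\<in>{1..p}. wstar j) = 1" using wsp by simp
  qed
  define Y where "Y = mat p p (\<lambda>(i,k). regf (x (Suc k)) $ i)"
  have dY: "det Y \<noteq> 0" unfolding Y_def by (rule detY_nonzero[OF hp hx hind])
  define C where "C = (det Y)^2 * (a/b)^p * (\<Prod>j\<in>{1..p}. E j) * \<beta>0"
  have C0: "C > 0" unfolding C_def using dY ha hb b0 unfolding E_def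
    by (intro mult_pos_pos prod_pos) auto
  define L where "L = (\<lambda>w::nat \<Rightarrow> real. d * (1 - w p) + D * w p)"
  have Lpos: "L w > 0" if "0 \<le> w p" "w p \<le> 1" for w
  proof -
    have "L w = d + (D - d) * w p" unfolding L_def by (simp add: algebra_simps)
    moreover have "(D - d) * w p \<ge> 0" using dD that by simp
    ultimately show ?thesis using d0 by linarith
  qed
  have wbounds: "0 \<le> w p \<and> w p \<le> 1" if "is_design_weights {1..p} w" for w
  proof -
    have w0: "\<forall>j\<in>{1..p}. w j \<ge> 0" and ws: "(\<Sum>j\<in>{1..p}. w j) = 1"
      using that unfolding is_design_weights_def by auto
    have "(\<Sum>j\<in>{1..p}. w j) = w p + (\<Sum>j\<in>{1..p-1}. w j)" unfolding split using pn by simp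
    moreover have "(\<Sum>j\<in>{1..p-1}. w j) \<ge> 0" using w0 by (intro sum_nonneg) auto
    moreover have "w p \<ge> 0" using w0 hp by auto
    ultimately show ?thesis using ws by linarith
  qed
  have detG: "det (M_PG a b m p {1..p} x w \<beta>) = C * ((\<Prod>j\<in>{1..p}. w j) / L w)"
    if wd: "is_design_weights {1..p} w" for w
  proof -
    have w0: "\<forall>j\<in>{1..p}. w j \<ge> 0" and ws: "(\<Sum>j\<in>{1..p}. w j) = 1"
      using wd unfolding is_design_weights_def by auto
    have "(\<Sum>j\<in>{1..p}. w j * E j) = w p * E p + (\<Sum>j\<in>{1..p-1}. w j * E j)"
      unfolding split using pn by simp
    also have "(\<Sum>j\<in>{1..p-1}. w j * E j) = (\<Sum>j\<in>{1..p-1}. w j) * exp c"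
      using Ec by (simp add: sum_distrib_right)
    also have "(\<Sum>j\<in>{1..p-1}. w j) = 1 - w p"
      using ws unfolding split using pn by simp
    finally have SL: "(\<Sum>j\<in>{1..p}. w j * E j) + \<beta>0 = L w"
      unfolding L_def d_def D_def Ep by (simp add: algebra_simps)
    have Lw: "L w > 0" using Lpos wbounds[OF wd] by auto
    have "det (M_PG a b m p {1..p} x w \<beta>) = (det Y)^2 * (a/b)^p
     * ((\<Prod>j\<in>{1..p}. w j) * (\<Prod>j\<in>{1..p}. E j)) * (\<beta>0 / ((\<Sum>j\<in>{1..p}. w j * E j) + \<beta>0))"
      unfolding Y_def E_def \<beta>0_def by (rule det_MPG_formula[OF hp hm hb hx w0])
    also have "\<dots> = C * ((\<Prod>j\<in>{1..p}. w j) / L w)" unfolding SL C_def by (simp add: divide_inverse mult_ac)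
    finally show ?thesis .
  qed
  have Gstar: "(\<Prod>j\<in>{1..p}. wstar j) = q^(p-1) * wp"
  proof -
    have "(\<Prod>j\<in>{1..p}. wstar j) = wstar p * (\<Prod>j\<in>{1..p-1}. wstar j)" unfolding split using pn by simp
    also have "(\<Prod>j\<in>{1..p-1}. wstar j) = (\<Prod>j\<in>{1..p-1}. q)" using wsq by (intro prod.cong) auto
    also have "\<dots> = q^(p-1)" by simp
    finally show ?thesis using wsp by simp
  qed
  have Lstar: "L wstar = d * (1 - wp) + D * wp" unfolding L_def wsp ..
  have Lspos: "L wstar > 0" using Lpos[of wstar] wp0 wp1 wsp by simp
  have cmp: "(\<Prod>j\<in>{1..p}. w j) / L w \<le> (\<Prod>j\<in>{1..p}. wstar j) / L wstar
      \<and> ((\<Prod>j\<in>{1..p}. w j) / L w = (\<Prod>j\<in>{1..p}. wstar j) / L wstar \<longrightarrow> (\<forall>j\<in>{1..p}. w j = wstar j))"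
    if wd: "is_design_weights {1..p} w" for w
  proof -
    have w0: "\<forall>j\<in>{1..p}. w j \<ge> 0" and ws: "(\<Sum>j\<in>{1..p}. w j) = 1"
      using wd unfolding is_design_weights_def by auto
    have Lw: "L w > 0" using Lpos wbounds[OF wd] by auto
    have Pw: "(\<Prod>j\<in>{1..p}. w j) = (\<Prod>j\<in>{1..p-1}. w j) * w p" unfolding split using pn by simp
    note oi = opt_ineq[OF hp d0 dD wp0 wp1 quad w0 ws, folded q_def]
    have ineq: "(\<Prod>j\<in>{1..p}. w j) * L wstar \<le> (\<Prod>j\<in>{1..p}. wstar j) * L w"
      unfolding Pw Gstar Lstar using oi(1) unfolding L_def by simp
    show ?thesis
    proof
      show "(\<Prod>j\<in>{1..p}. w j) / L w \<le> (\<Prod>j\<in>{1..p}. wstar j) / L wstar"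
        using ineq Lw Lspos by (simp add: divide_le_eq le_divide_eq mult.commute mult.left_commute)
      show "(\<Prod>j\<in>{1..p}. w j) / L w = (\<Prod>j\<in>{1..p}. wstar j) / L wstar \<longrightarrow> (\<forall>j\<in>{1..p}. w j = wstar j)"
      proof
        assume "(\<Prod>j\<in>{1..p}. w j) / L w = (\<Prod>j\<in>{1..p}. wstar j) / L wstar"
        hence "(\<Prod>j\<in>{1..p}. w j) * L wstar = (\<Prod>j\<in>{1..p}. wstar j) * L w"
          using Lw Lspos by (simp add: field_simps)
        hence "(\<Prod>j\<in>{1..p-1}. w j) * w p * (d * (1 - wp) + D * wp) = q ^ (p - 1) * wp * (d * (1 - w p) + D * w p)"
          unfolding Pw Gstar Lstar unfolding L_def by simp
        hence eqq: "\<forall>j\<in>{1..p-1}. w j = q" by (rule oi(2))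
        have "(\<Sum>j\<in>{1..p}. w j) = w p + (\<Sum>j\<in>{1..p-1}. w j)" unfolding split using pn by simp
        also have "(\<Sum>j\<in>{1..p-1}. w j) = (\<Sum>j\<in>{1..p-1}. q)" using eqq by (intro sum.cong) auto
        also have "\<dots> = (real p - 1) * q" using cardp by simp
        also have "(real p - 1) * q = 1 - wp" unfolding q_def using pp by simp
        finally have "w p = wp" using ws by simp
        thus "\<forall>j\<in>{1..p}. w j = wstar j" using eqq wsq wsp split by auto
      qed
    qed
  qed
  show ?thesis
  proof (intro conjI)
    show "is_design_weights {1..p} wstar" by (rule design)
    show "\<forall>w. is_design_weights {1..p} w \<longrightarrow>
          det (M_PG a b m p {1..p} x w \<beta>) \<le> det (M_PG a b m p {1..p} x wstar \<beta>)"
    proof (intro allI impI)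
      fix w assume wd: "is_design_weights {1..p} w"
      show "det (M_PG a b m p {1..p} x w \<beta>) \<le> det (M_PG a b m p {1..p} x wstar \<beta>)"
      proof -
        have le: "(\<Prod>j\<in>{1..p}. w j) / L w \<le> (\<Prod>j\<in>{1..p}. wstar j) / L wstar"
          using cmp[OF wd] by blast
        have "C * ((\<Prod>j\<in>{1..p}. w j) / L w) \<le> C * ((\<Prod>j\<in>{1..p}. wstar j) / L wstar)"
          using C0 le by (intro mult_left_mono) auto
        thus ?thesis unfolding detG[OF wd] detG[OF design] .
      qed
    qed
    show "\<forall>w. is_design_weights {1..p} w \<and>
          det (M_PG a b m p {1..p} x w \<beta>) = det (M_PG a b m p {1..p} x wstar \<beta>)
          \<longrightarrow> (\<forall>j\<in>{1..p}. w j = wstar j)"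
    proof (intro allI impI)
      fix w assume h: "is_design_weights {1..p} w \<and>
          det (M_PG a b m p {1..p} x w \<beta>) = det (M_PG a b m p {1..p} x wstar \<beta>)"
      hence wd: "is_design_weights {1..p} w" by (elim conjE)
      have "det (M_PG a b m p {1..p} x w \<beta>) = det (M_PG a b m p {1..p} x wstar \<beta>)"
        using h by (elim conjE)
      hence "C * ((\<Prod>j\<in>{1..p}. w j) / L w) = C * ((\<Prod>j\<in>{1..p}. wstar j) / L wstar)"
        unfolding detG[OF wd] detG[OF design] .
      hence "(\<Prod>j\<in>{1..p}. w j) / L w = (\<Prod>j\<in>{1..p}. wstar j) / L wstar" using C0 by (metis mult_cancel_left order_less_irrefl)
      thus "\<forall>j\<in>{1..p}. w j = wstar j" using cmp[OF wd] by blast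
    qed
    show "0 < wp" by (rule wp0)
    show "wp < 1 / real p" by (rule wpp)
    show "\<forall>j\<in>{1..p-1}. 1 / real p < wstar j \<and> wstar j < 1 / (real p - 1)"
      using wsq q1 q2 by auto
  qed
qed

end
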